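(* Let $f:M\to\mathbb R^n$ be a connected non-degenerate centro-affine hypersurface immersion with parallel cubic form, $y\in\mathcal D=M\times\mathbb R_{++}$, $J$ the Jordan algebra on $T_y\mathcal D$ and $\gamma$ the bilinear form $F''$ at $y$ (see context). If $\gamma$ is negative definite (i.e. $f$ is locally strongly convex of hyperbolic type), then $J$ is formally real.
   Context: Centro-affine hypersurface immersion: $f(\xi)$ transversal to $f_*T_\xi M$; with transversal field $-f$, $D_Xf_*Y=f_*\nabla_XY+h(X,Y)(-f)$ defines $\nabla$ and metric $h$; non-degenerate: $h$ non-degenerate; parallel cubic form: $\hat\nabla(\nabla h)=0$, $\hat\nabla$ Levi-Civita of $h$. With $F(\xi,\lambda)=\log\lambda$ on $\mathcal D$ and affine coordinates pulled back via $(\xi,\lambda)\mapsto\lambda f(\xi)$, $J$ is $T_y\mathcal D$ with product $(u\bullet v)^\gamma=-\frac12F_{,\alpha\beta\delta}F^{,\gamma\delta}u^\alpha v^\beta$. A real Jordan algebra is formally real if $\sum_k x_k^2=0$ implies all $x_k=0$. *)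

theory Defs
  imports "HOL-Analysis.Analysis"
begin

definition pd :: "(real^'i \<Rightarrow> 'b::real_normed_vector) \<Rightarrow> real^'i \<Rightarrow> 'i \<Rightarrow> 'b" where
  "pd g x i = frechet_derivative g (at x) (axis i 1)"

fun ipd :: "(real^'i \<Rightarrow> 'b::real_normed_vector) \<Rightarrow> 'i list \<Rightarrow> real^'i \<Rightarrow> 'b" where
  "ipd g [] = g"
| "ipd g (i # is) = (\<lambda>x. pd (ipd g is) x i)"

definition smooth_on :: "(real^'i) set \<Rightarrow> (real^'i \<Rightarrow> 'b::real_normed_vector) \<Rightarrow> bool" where
  "smooth_on U g \<longleftrightarrow> (\<forall>is. \<forall>x\<in>U. ipd g is differentiable (at x))"

definition centroaffine_immersion :: "(real^'m) set \<Rightarrow> (real^'m \<Rightarrow> real^'n) \<Rightarrow> bool" where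
  "centroaffine_immersion U f \<longleftrightarrow>
     open U \<and> smooth_on U f \<and>
     (\<forall>\<xi>\<in>U. inj (frechet_derivative f (at \<xi>)) \<and>
             f \<xi> \<notin> range (frechet_derivative f (at \<xi>)))"

text \<open>Structure equation with transversal field -f, in coordinates:
  D_{e_i} f_* e_j = f_* (nabla_{e_i} e_j) + h(e_i,e_j) (-f),
  where nabla_{e_i} e_j = sum_k Gam xi i j k e_k.\<close>
definition structure_eq ::
  "(real^'m) set \<Rightarrow> (real^'m \<Rightarrow> real^'n) \<Rightarrow> (real^'m \<Rightarrow> 'm \<Rightarrow> 'm \<Rightarrow> 'm \<Rightarrow> real)
     \<Rightarrow> (real^'m \<Rightarrow> 'm \<Rightarrow> 'm \<Rightarrow> real) \<Rightarrow> bool" where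
  "structure_eq U f Gam h \<longleftrightarrow>
     (\<forall>\<xi>\<in>U. \<forall>i j. ipd f [i, j] \<xi> =
        (\<Sum>k\<in>UNIV. Gam \<xi> i j k *\<^sub>R pd f \<xi> k) - h \<xi> i j *\<^sub>R f \<xi>)"

definition hmat :: "(real^'m \<Rightarrow> 'm \<Rightarrow> 'm \<Rightarrow> real) \<Rightarrow> real^'m \<Rightarrow> real^'m^'m" where
  "hmat h \<xi> = (\<chi> i j. h \<xi> i j)"

definition nondegenerate_metric :: "(real^'m) set \<Rightarrow> (real^'m \<Rightarrow> 'm \<Rightarrow> 'm \<Rightarrow> real) \<Rightarrow> bool" where
  "nondegenerate_metric U h \<longleftrightarrow> (\<forall>\<xi>\<in>U. invertible (hmat h \<xi>))"

text \<open>Cubic form C = nabla h: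
  C_{ijk} = d_i h_{jk} - h(nabla_{e_i} e_j, e_k) - h(e_j, nabla_{e_i} e_k).\<close>
definition cubic_form ::
  "(real^'m \<Rightarrow> 'm \<Rightarrow> 'm \<Rightarrow> 'm \<Rightarrow> real) \<Rightarrow> (real^'m \<Rightarrow> 'm \<Rightarrow> 'm \<Rightarrow> real)
     \<Rightarrow> real^'m \<Rightarrow> 'm \<Rightarrow> 'm \<Rightarrow> 'm \<Rightarrow> real" where
  "cubic_form Gam h \<xi> i j k =
     pd (\<lambda>z. h z j k) \<xi> i
     - (\<Sum>l\<in>UNIV. Gam \<xi> i j l * h \<xi> l k)
     - (\<Sum>l\<in>UNIV. Gam \<xi> i k l * h \<xi> j l)"

definition levi_civita ::
  "(real^'m \<Rightarrow> 'm \<Rightarrow> 'm \<Rightarrow> real) \<Rightarrow> real^'m \<Rightarrow> 'm \<Rightarrow> 'm \<Rightarrow> 'm \<Rightarrow> real" where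
  "levi_civita h \<xi> i j l =
     (1/2) * (\<Sum>k\<in>UNIV. matrix_inv (hmat h \<xi>) $ l $ k *
        (pd (\<lambda>z. h z j k) \<xi> i + pd (\<lambda>z. h z i k) \<xi> j - pd (\<lambda>z. h z i j) \<xi> k))"

definition parallel_cubic_form ::
  "(real^'m) set \<Rightarrow> (real^'m \<Rightarrow> 'm \<Rightarrow> 'm \<Rightarrow> 'm \<Rightarrow> real) \<Rightarrow> (real^'m \<Rightarrow> 'm \<Rightarrow> 'm \<Rightarrow> real) \<Rightarrow> bool" where
  "parallel_cubic_form U Gam h \<longleftrightarrow>
     (\<forall>\<xi>\<in>U. \<forall>p i j k.
        pd (\<lambda>z. cubic_form Gam h z i j k) \<xi> p
        - (\<Sum>l\<in>UNIV. levi_civita h \<xi> p i l * cubic_form Gam h \<xi> l j k)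
        - (\<Sum>l\<in>UNIV. levi_civita h \<xi> p j l * cubic_form Gam h \<xi> i l k)
        - (\<Sum>l\<in>UNIV. levi_civita h \<xi> p k l * cubic_form Gam h \<xi> i j l) = 0)"

text \<open>Hessian F_{,ab} and third derivatives F_{,abd} of the potential G (F in affine coordinates).\<close>
definition F2 :: "(real^'n \<Rightarrow> real) \<Rightarrow> real^'n \<Rightarrow> 'n \<Rightarrow> 'n \<Rightarrow> real" where
  "F2 G x a b = ipd G [b, a] x"

definition F3 :: "(real^'n \<Rightarrow> real) \<Rightarrow> real^'n \<Rightarrow> 'n \<Rightarrow> 'n \<Rightarrow> 'n \<Rightarrow> real" where
  "F3 G x a b d = ipd G [d, b, a] x"

definition gamma_form :: "(real^'n \<Rightarrow> real) \<Rightarrow> real^'n \<Rightarrow> real^'n \<Rightarrow> real^'n \<Rightarrow> real" where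
  "gamma_form G x u v = (\<Sum>a\<in>UNIV. \<Sum>b\<in>UNIV. F2 G x a b * u $ a * v $ b)"

definition jprod :: "(real^'n \<Rightarrow> real) \<Rightarrow> real^'n \<Rightarrow> real^'n \<Rightarrow> real^'n \<Rightarrow> real^'n" where
  "jprod G x u v = (\<chi> c. - (1/2) * (\<Sum>a\<in>UNIV. \<Sum>b\<in>UNIV. \<Sum>d\<in>UNIV.
       F3 G x a b d * matrix_inv (\<chi> p q. F2 G x p q) $ c $ d * u $ a * v $ b))"

definition formally_real :: "('a \<Rightarrow> 'a \<Rightarrow> 'a::comm_monoid_add) \<Rightarrow> bool" where
  "formally_real prodop \<longleftrightarrow>
     (\<forall>xs. sum_list (map (\<lambda>x. prodop x x) xs) = 0 \<longrightarrow> (\<forall>x\<in>set xs. x = 0))"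

definition negative_definite :: "('a::zero \<Rightarrow> 'a \<Rightarrow> real) \<Rightarrow> bool" where
  "negative_definite B \<longleftrightarrow> (\<forall>u. u \<noteq> 0 \<longrightarrow> B u u < 0)"

end

theory Submission
  imports Defs
begin


lemma matrix_inv_both:
  assumes "invertible (A::'a::semiring_1^'n^'m)"
  shows "A ** matrix_inv A = mat 1 \<and> matrix_inv A ** A = mat 1"
  using assms unfolding invertible_def matrix_inv_def by (rule someI_ex)

lemma swap4:
  "(\<Sum>b\<in>A. \<Sum>a\<in>B. \<Sum>c\<in>C. \<Sum>d\<in>D. f b a c d) = (\<Sum>a\<in>B. \<Sum>c\<in>C. \<Sum>d\<in>D. \<Sum>b\<in>A. (f b a c d::real))"
proof -
  have "(\<Sum>b\<in>A. \<Sum>a\<in>B. \<Sum>c\<in>C. \<Sum>d\<in>D. f b a c d) = (\<Sum>a\<in>B. \<Sum>b\<in>A. \<Sum>c\<in>C. \<Sum>d\<in>D. f b a c d)"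
    by (rule sum.swap)
  also have "\<dots> = (\<Sum>a\<in>B. \<Sum>c\<in>C. \<Sum>b\<in>A. \<Sum>d\<in>D. f b a c d)"
    by (rule sum.cong[OF refl], rule sum.swap)
  also have "\<dots> = (\<Sum>a\<in>B. \<Sum>c\<in>C. \<Sum>d\<in>D. \<Sum>b\<in>A. f b a c d)"
    by (rule sum.cong[OF refl], rule sum.cong[OF refl], rule sum.swap)
  finally show ?thesis .
qed

lemma alg_part:
  fixes G :: "real^'n \<Rightarrow> real" and y :: "real^'n"
  assumes euler: "\<And>a b. (\<Sum>d\<in>UNIV. F3 G y a b d * y$d) = -2 * F2 G y a b"
    and negdef: "negative_definite (gamma_form G y)"
  shows "formally_real (jprod G y)"
proof -
  define M where "M = (\<chi> p q. F2 G y p q)"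
  have gM: "gamma_form G y u u = u \<bullet> (M *v u)" for u
    by (simp add: gamma_form_def M_def inner_vec_def matrix_vector_mult_def sum_distrib_left
        mult_ac)
  have ker: "\<forall>x. M *v x = 0 \<longrightarrow> x = 0"
  proof (intro allI impI)
    fix x assume "M *v x = 0"
    hence "gamma_form G y x x = 0" by (simp add: gM)
    thus "x = 0" using negdef unfolding negative_definite_def by force
  qed
  hence "invertible M" using matrix_left_invertible_ker invertible_left_inverse by blast
  hence MM: "M ** matrix_inv M = mat 1" using matrix_inv_both by blast
  have MMe: "(\<Sum>b\<in>UNIV. F2 G y a b * matrix_inv M $ b $ d) = (if a = d then 1 else 0)" for a d
  proof -
    have "(M ** matrix_inv M) $ a $ d = (if a = d then 1 else 0)" using MM by (simp add: mat_def)
    thus ?thesis by (simp add: matrix_matrix_mult_def M_def)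
  qed
  define gy where "gy w = (\<Sum>a\<in>UNIV. \<Sum>b\<in>UNIV. F2 G y a b * y $ a * w $ b)" for w
  have gylin: "gy (sum_list (map h xs)) = sum_list (map (\<lambda>x. gy (h x)) xs)" for h :: "real^'n \<Rightarrow> real^'n" and xs
    by (induction xs) (auto simp: gy_def algebra_simps sum.distrib)
  have key: "gy (jprod G y x x) = gamma_form G y x x" for x
  proof -
    define c where "c b = (\<Sum>a\<in>UNIV. F2 G y a b * y $ a)" for b
    have S1: "gy w = (\<Sum>b\<in>UNIV. c b * w $ b)" for w
      unfolding gy_def c_def sum_distrib_right by (subst sum.swap) simp
    have S2: "(\<Sum>b\<in>UNIV. c b * matrix_inv M $ b $ d) = y $ d" for d
    proof -
      have "(\<Sum>b\<in>UNIV. c b * matrix_inv M $ b $ d)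
          = (\<Sum>a\<in>UNIV. y $ a * (\<Sum>b\<in>UNIV. F2 G y a b * matrix_inv M $ b $ d))"
        unfolding c_def sum_distrib_right sum_distrib_left
        by (subst sum.swap) (simp add: mult_ac)
      also have "\<dots> = y $ d" by (simp add: MMe if_distrib cong: if_cong)
      finally show ?thesis .
    qed
    have S2': "(\<Sum>b\<in>UNIV. K * (c b * matrix_inv M $ b $ d)) = K * y$d" for K d
      by (simp add: sum_distrib_left[symmetric] S2)
    have "gy (jprod G y x x) = (\<Sum>b\<in>UNIV. \<Sum>a'\<in>UNIV. \<Sum>b'\<in>UNIV. \<Sum>d\<in>UNIV.
        - (1/2) * (F3 G y a' b' d * x $ a' * x $ b') * (c b * matrix_inv M $ b $ d))"
      unfolding S1 jprod_def M_def by (simp add: sum_distrib_left mult_ac)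
    also have "\<dots> = (\<Sum>a'\<in>UNIV. \<Sum>b'\<in>UNIV. \<Sum>d\<in>UNIV. \<Sum>b\<in>UNIV.
        - (1/2) * (F3 G y a' b' d * x $ a' * x $ b') * (c b * matrix_inv M $ b $ d))"
      by (rule swap4)
    also have "\<dots> = (\<Sum>a'\<in>UNIV. \<Sum>b'\<in>UNIV. \<Sum>d\<in>UNIV.
        - (1/2) * (F3 G y a' b' d * x $ a' * x $ b') * y $ d)"
      by (simp only: S2')
    also have "\<dots> = (\<Sum>a'\<in>UNIV. \<Sum>b'\<in>UNIV. - (1/2) * x $ a' * x $ b' * (\<Sum>d\<in>UNIV. F3 G y a' b' d * y $ d))"
      by (simp add: sum_distrib_left mult_ac)
    also have "\<dots> = gamma_form G y x x"
      using euler by (simp add: gamma_form_def mult_ac)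
    finally show ?thesis .
  qed
  show ?thesis unfolding formally_real_def
  proof (intro allI impI ballI)
    fix xs x assume s: "sum_list (map (\<lambda>x. jprod G y x x) xs) = 0" and x: "x \<in> set xs"
    have "sum_list (map (\<lambda>x. gamma_form G y x x) xs) = 0"
    proof -
      have "gy (sum_list (map (\<lambda>x. jprod G y x x) xs)) = 0" using s by (simp add: gy_def)
      thus ?thesis using gylin[of "\<lambda>x. jprod G y x x" xs] by (simp add: key o_def)
    qed
    moreover have nonpos: "\<forall>x. gamma_form G y x x \<le> 0"
      using negdef unfolding negative_definite_def
      by (metis gM inner_zero_left less_eq_real_def)
    ultimately have "\<forall>x\<in>set xs. gamma_form G y x x = 0"
    proof (induction xs)
      case Nil then show ?case by simp
    next
      case (Cons a xs)
      have "sum_list (map (\<lambda>x. gamma_form G y x x) xs) \<le> 0"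
        using Cons.prems(2) by (induction xs) (auto intro: add_nonpos_nonpos)
      then show ?case using Cons by (auto simp: add_nonpos_eq_0_iff)
    qed
    thus "x = 0" using x negdef unfolding negative_definite_def by force
  qed
qed



lemma fd_local:
  assumes "open S" "x \<in> S" "\<And>z. z \<in> S \<Longrightarrow> g z = g' z"
  shows "frechet_derivative g (at x) = frechet_derivative g' (at x)"
proof -
  have "(g has_derivative D) (at x) \<longleftrightarrow> (g' has_derivative D) (at x)" for D
    using has_derivative_transform_within_open[OF _ assms(1,2), of g D UNIV g'] 
          has_derivative_transform_within_open[OF _ assms(1,2), of g' D UNIV g] assms(3)
    by auto
  thus ?thesis unfolding frechet_derivative_def by simp
qed

lemma pd_local:
  assumes "open S" "x \<in> S" "\<And>z. z \<in> S \<Longrightarrow> g z = g' z"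
  shows "pd g x i = pd g' x i"
  unfolding pd_def using fd_local[OF assms] by simp

lemma diff_local:
  assumes "open S" "x \<in> S" "\<And>z. z \<in> S \<Longrightarrow> g z = g' z" "g' differentiable at x"
  shows "g differentiable at x"
  using assms has_derivative_transform_within_open[of g' _ x UNIV S g] unfolding differentiable_def
  by metis

lemma scale1:
  fixes K :: "real^'n \<Rightarrow> real"
  assumes W: "open W" "z \<in> W" and dK1: "K differentiable at (t *\<^sub>R z)"
    and dK2: "K differentiable at z"
    and hom: "\<And>u. u \<in> W \<Longrightarrow> K (t *\<^sub>R u) = c * K u + d"
  shows "t * pd K (t *\<^sub>R z) a = c * pd K z a"
proof -
  let ?D1 = "frechet_derivative K (at (t *\<^sub>R z))"
  let ?D2 = "frechet_derivative K (at z)"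
  have h1: "(K has_derivative ?D1) (at (t *\<^sub>R z))" using dK1 frechet_derivative_works by blast
  have h2: "(K has_derivative ?D2) (at z)" using dK2 frechet_derivative_works by blast
  have A: "((\<lambda>u. K (t *\<^sub>R u)) has_derivative (\<lambda>v. ?D1 (t *\<^sub>R v))) (at z)"
  proof -
    have "((\<lambda>u. t *\<^sub>R u) has_derivative (\<lambda>v. t *\<^sub>R v)) (at z)"
      by (auto intro!: derivative_eq_intros)
    from has_derivative_compose[OF this h1] show ?thesis by (simp add: o_def)
  qed
  have B: "((\<lambda>u. c * K u + d) has_derivative (\<lambda>v. c * ?D2 v)) (at z)"
    using h2 by (auto intro!: derivative_eq_intros)
  have B': "((\<lambda>u. K (t *\<^sub>R u)) has_derivative (\<lambda>v. c * ?D2 v)) (at z)"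
    by (rule has_derivative_transform_within_open[OF B W]) (simp add: hom)
  have "(\<lambda>v. ?D1 (t *\<^sub>R v)) = (\<lambda>v. c * ?D2 v)" using has_derivative_unique[OF A B'] .
  hence "?D1 (t *\<^sub>R axis a 1) = c * ?D2 (axis a 1)" by metis
  moreover have "?D1 (t *\<^sub>R axis a 1) = t * ?D1 (axis a 1)"
    using linear_frechet_derivative[OF dK1] by (simp add: linear_scale)
  ultimately show ?thesis unfolding pd_def by simp
qed

lemma smooth_diff:
  assumes "smooth_on V G" "x \<in> V"
  shows "ipd G is differentiable at x"
  using assms unfolding smooth_on_def by blast

lemma euler_from_homog:
  fixes G :: "real^'n \<Rightarrow> real"
  assumes V: "open V" "y \<in> V" and sm: "smooth_on V G" and rho: "0 < \<rho>" and del: "0 < \<delta>" "\<delta> < 1"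
    and hom: "\<And>z t. z \<in> ball y \<rho> \<Longrightarrow> \<bar>t - 1\<bar> < \<delta> \<Longrightarrow> t *\<^sub>R z \<in> V \<and> G (t *\<^sub>R z) = G z + ln t"
    and sub: "ball y \<rho> \<subseteq> V"
  shows "(\<Sum>d\<in>UNIV. F3 G y a b d * y$d) = -2 * F2 G y a b"
proof -
  define H1 where "H1 = ipd G [a]"
  define H2 where "H2 = ipd G [b, a]"
  have H1e: "H1 = (\<lambda>x. pd G x a)" by (simp add: H1_def)
  have H2e: "H2 = (\<lambda>x. pd H1 x b)" by (simp add: H1_def H2_def)
  have G0: "ipd G [] = G" by simp
  have dG: "G differentiable at x" if "x \<in> V" for x using smooth_diff[OF sm that, of "[]"] by simp
  have dH1: "H1 differentiable at x" if "x \<in> V" for x using smooth_diff[OF sm that, of "[a]"] H1_def by simp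
  have dH2: "H2 differentiable at x" if "x \<in> V" for x using smooth_diff[OF sm that, of "[b,a]"] H2_def by simp
  have L1: "H1 (t *\<^sub>R z) = (1/t) * H1 z" if z: "z \<in> ball y \<rho>" and t: "\<bar>t - 1\<bar> < \<delta>" for z t
  proof -
    have tpos: "t > 0" using t del by auto
    have "t * pd G (t *\<^sub>R z) a = 1 * pd G z a"
      by (rule scale1[where W = "ball y \<rho>"]) (use z t hom sub dG in auto)
    thus ?thesis using tpos by (simp add: H1e field_simps)
  qed
  have L2: "H2 (t *\<^sub>R y) = H2 y / t^2" if t: "\<bar>t - 1\<bar> < \<delta>" for t
  proof -
    have tpos: "t > 0" using t del by auto
    have yb: "y \<in> ball y \<rho>" using rho by simp
    have "t * pd H1 (t *\<^sub>R y) b = (1/t) * pd H1 y b"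
      by (rule scale1[where W = "ball y \<rho>" and d = 0]) (use yb t hom sub dH1 L1 V in auto)
    thus ?thesis using tpos by (simp add: H2e field_simps power2_eq_square)
  qed
  let ?D = "frechet_derivative H2 (at y)"
  have hD: "(H2 has_derivative ?D) (at y)" using dH2[OF V(2)] frechet_derivative_works by blast
  have A: "((\<lambda>t. H2 (t *\<^sub>R y)) has_derivative (\<lambda>s. ?D (s *\<^sub>R y))) (at 1)"
  proof -
    have "((\<lambda>t. t *\<^sub>R y) has_derivative (\<lambda>s. s *\<^sub>R y)) (at (1::real))"
      by (auto intro!: derivative_eq_intros)
    moreover have "(H2 has_derivative ?D) (at ((1::real) *\<^sub>R y))" using hD by simp
    ultimately have "((\<lambda>x. H2 (x *\<^sub>R y)) has_derivative (\<lambda>x. ?D (x *\<^sub>R y))) (at (1::real))"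
      by (rule has_derivative_compose)
    then show ?thesis by (simp add: o_def)
  qed
  have B: "((\<lambda>t. H2 y / t^2) has_derivative (\<lambda>s. s * (-2 * H2 y))) (at (1::real))"
    by (auto intro!: derivative_eq_intros simp: power2_eq_square)
  have B': "((\<lambda>t. H2 (t *\<^sub>R y)) has_derivative (\<lambda>s. s * (-2 * H2 y))) (at (1::real))"
  proof (rule has_derivative_transform_within_open[OF B, of "ball 1 \<delta>"])
    show "open (ball (1::real) \<delta>)" by simp
    show "(1::real) \<in> ball 1 \<delta>" using del by simp
    fix t :: real assume "t \<in> ball 1 \<delta>"
    hence "\<bar>t - 1\<bar> < \<delta>" by (simp add: dist_real_def abs_minus_commute)
    thus "H2 y / t^2 = H2 (t *\<^sub>R y)" using L2 by simp
  qed
  have "(\<lambda>s. ?D (s *\<^sub>R y)) = (\<lambda>s. s * (-2 * H2 y))" using has_derivative_unique[OF A B'] .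
  hence E: "?D y = -2 * H2 y" by (metis scale_one mult_1)
  have lin: "linear ?D" using linear_frechet_derivative[OF dH2[OF V(2)]] .
  have "?D y = ?D (\<Sum>d\<in>UNIV. y$d *\<^sub>R axis d 1)"
    by (metis (no_types) basis_expansion scalar_mult_eq_scaleR)
  also have "\<dots> = (\<Sum>d\<in>UNIV. y$d * ?D (axis d 1))"
    using lin by (simp add: linear_sum linear_scale)
  finally have "(\<Sum>d\<in>UNIV. y$d * pd H2 y d) = -2 * H2 y" using E by (simp add: pd_def)
  moreover have "F3 G y a b d = pd H2 y d" for d by (simp add: F3_def H2_def)
  moreover have "F2 G y a b = H2 y" by (simp add: F2_def H2_def)
  ultimately show ?thesis by (simp add: mult.commute)
qed



lemma ipd_local:
  assumes "open U" "\<And>z. z \<in> U \<Longrightarrow> g z = g' z"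
  shows "x \<in> U \<Longrightarrow> ipd g is x = ipd g' is x"
proof (induction "is" arbitrary: x)
  case Nil then show ?case using assms by simp
next
  case (Cons i "is")
  have "pd (ipd g is) x i = pd (ipd g' is) x i"
    by (rule pd_local[OF assms(1) Cons.prems]) (use Cons.IH in auto)
  then show ?case by simp
qed

lemma smooth_coind:
  fixes h :: "real^'i \<Rightarrow> 'b::real_normed_vector"
  assumes U: "open U" and Ph: "P h"
    and step: "\<And>g. P g \<Longrightarrow> (\<forall>x\<in>U. g differentiable at x) \<and> (\<forall>j. \<exists>g'. P g' \<and> (\<forall>x\<in>U. pd g x j = g' x))"
  shows "smooth_on U h"
proof -
  have claim: "\<exists>g'. P g' \<and> (\<forall>x\<in>U. ipd g is x = g' x)" if "P g" for g "is"
    using that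
  proof (induction "is" arbitrary: g)
    case Nil then show ?case by auto
  next
    case (Cons i "is")
    then obtain g' where g': "P g'" "\<forall>x\<in>U. ipd g is x = g' x" by blast
    obtain g'' where g'': "P g''" "\<forall>x\<in>U. pd g' x i = g'' x" using step[OF g'(1)] by blast
    have "\<forall>x\<in>U. ipd g (i # is) x = g'' x"
    proof
      fix x assume x: "x \<in> U"
      have "pd (ipd g is) x i = pd g' x i" by (rule pd_local[OF U x]) (use g' in auto)
      thus "ipd g (i # is) x = g'' x" using g'' x by simp
    qed
    thus ?case using g'' by blast
  qed
  show ?thesis unfolding smooth_on_def
  proof (intro allI ballI)
    fix "is" x assume x: "x \<in> U"
    obtain g' where g': "P g'" "\<forall>x\<in>U. ipd h is x = g' x" using claim[OF Ph] by blast
    show "ipd h is differentiable at x"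
      by (rule diff_local[OF U x, of _ g']) (use g' step x in auto)
  qed
qed

lemma smooth_local:
  assumes "open U" "smooth_on U g" "\<And>z. z \<in> U \<Longrightarrow> g z = g' z"
  shows "smooth_on U g'"
  unfolding smooth_on_def
proof (intro allI ballI)
  fix "is" x assume x: "x \<in> U"
  have "\<forall>z\<in>U. ipd g' is z = ipd g is z" using ipd_local[OF assms(1), of g' g] assms(3) by auto
  thus "ipd g' is differentiable at x"
    using diff_local[OF assms(1) x, of "ipd g' is" "ipd g is"] assms(2) x unfolding smooth_on_def by auto
qed

lemma smooth_subset: "smooth_on U g \<Longrightarrow> U' \<subseteq> U \<Longrightarrow> smooth_on U' g"
  unfolding smooth_on_def by blast

lemma smooth_differentiable: "smooth_on U g \<Longrightarrow> x \<in> U \<Longrightarrow> g differentiable at x"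
  using smooth_diff[of U g x "[]"] by simp

lemma ipd_snoc: "ipd g (is @ [j]) = ipd (\<lambda>x. pd g x j) is"
  by (induction "is") auto

lemma smooth_pd:
  fixes h :: "real^'i \<Rightarrow> 'b::real_normed_vector"
  assumes U: "open U" and sm: "smooth_on U h"
  shows "smooth_on U (\<lambda>x. pd h x j)"
proof (rule smooth_coind[OF U, where P = "\<lambda>g. \<exists>is. g = ipd h (is @ [j])"])
  show "\<exists>is. (\<lambda>x. pd h x j) = ipd h (is @ [j])" by (rule exI[of _ "[]"]) simp
  fix g assume "\<exists>is. g = ipd h (is @ [j])"
  then obtain "is" where g: "g = ipd h (is @ [j])" by blast
  show "(\<forall>x\<in>U. g differentiable at x) \<and> (\<forall>i. \<exists>g'. (\<exists>is. g' = ipd h (is @ [j])) \<and> (\<forall>x\<in>U. pd g x i = g' x))"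
  proof (intro conjI allI ballI)
    fix x assume "x \<in> U" thus "g differentiable at x" using sm g unfolding smooth_on_def by blast
  next
    fix i show "\<exists>g'. (\<exists>is. g' = ipd h (is @ [j])) \<and> (\<forall>x\<in>U. pd g x i = g' x)"
    proof (rule exI[of _ "ipd h ((i # is) @ [j])"], intro conjI ballI)
      show "\<exists>is'. ipd h ((i # is) @ [j]) = ipd h (is' @ [j])" by blast
      fix x show "pd g x i = ipd h ((i # is) @ [j]) x" by (simp add: g)
    qed
  qed
qed

lemma smooth_component:
  fixes f :: "real^'i \<Rightarrow> real^'k"
  assumes U: "open U" and sm: "smooth_on U f"
  shows "smooth_on U (\<lambda>x. f x $ k)"
proof (rule smooth_coind[OF U, where P = "\<lambda>g. \<exists>is. \<forall>x\<in>U. g x = ipd f is x $ k"])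
  show "\<exists>is. \<forall>x\<in>U. f x $ k = ipd f is x $ k" by (rule exI[of _ "[]"]) simp
  fix g assume "\<exists>is. \<forall>x\<in>U. g x = ipd f is x $ k"
  then obtain "is" where g: "\<forall>x\<in>U. g x = ipd f is x $ k" by blast
  have dd: "((\<lambda>x. ipd f is x $ k) has_derivative (\<lambda>v. frechet_derivative (ipd f is) (at x) v $ k)) (at x)"
    if "x \<in> U" for x
  proof -
    have "(ipd f is has_derivative frechet_derivative (ipd f is) (at x)) (at x)"
      using sm that frechet_derivative_works unfolding smooth_on_def by blast
    thus ?thesis using bounded_linear.has_derivative[OF bounded_linear_vec_nth] by blast
  qed
  show "(\<forall>x\<in>U. g differentiable at x) \<and> (\<forall>i. \<exists>g'. (\<exists>is. \<forall>x\<in>U. g' x = ipd f is x $ k) \<and> (\<forall>x\<in>U. pd g x i = g' x))"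
  proof (intro conjI allI ballI)
    fix x assume x: "x \<in> U"
    show "g differentiable at x"
      by (rule diff_local[OF U x, of _ "\<lambda>x. ipd f is x $ k"]) (use g dd[OF x] x differentiable_def in auto)
  next
    fix i show "\<exists>g'. (\<exists>is. \<forall>x\<in>U. g' x = ipd f is x $ k) \<and> (\<forall>x\<in>U. pd g x i = g' x)"
    proof (rule exI[of _ "\<lambda>x. ipd f (i # is) x $ k"], intro conjI ballI)
      show "\<exists>is'. \<forall>x\<in>U. ipd f (i # is) x $ k = ipd f is' x $ k" by blast
      fix x assume x: "x \<in> U"
      have "pd g x i = pd (\<lambda>x. ipd f is x $ k) x i" by (rule pd_local[OF U x]) (use g in auto)
      also have "\<dots> = frechet_derivative (ipd f is) (at x) (axis i 1) $ k"
        unfolding pd_def using frechet_derivative_at[OF dd[OF x]] by metis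
      finally show "pd g x i = ipd f (i # is) x $ k" by (simp add: pd_def)
    qed
  qed
qed




definition SP :: "((real^'i \<Rightarrow> real) \<times> (real^'i \<Rightarrow> real)) list \<Rightarrow> real^'i \<Rightarrow> real" where
  "SP ps x = sum_list (map (\<lambda>(A,B). A x * B x) ps)"

lemma SP_concat: "SP (concat (map F ps)) x = sum_list (map (\<lambda>p. SP (F p) x) ps)"
  by (induction ps) (auto simp: SP_def)

lemma SP_deriv:
  assumes "\<forall>(A,B)\<in>set ps. A differentiable at x \<and> B differentiable at x"
  shows "(SP ps has_derivative (\<lambda>v. sum_list (map (\<lambda>(A,B). frechet_derivative A (at x) v * B x + A x * frechet_derivative B (at x) v) ps))) (at x)"
  using assms
proof (induction ps)
  case Nil then show ?case by (simp add: SP_def)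
next
  case (Cons p ps)
  obtain A B where p: "p = (A, B)" by force
  have dA: "(A has_derivative frechet_derivative A (at x)) (at x)" and dB: "(B has_derivative frechet_derivative B (at x)) (at x)"
    using Cons.prems p frechet_derivative_works by auto
  have "SP (p # ps) = (\<lambda>x. A x * B x + SP ps x)" by (auto simp: SP_def p)
  moreover have "((\<lambda>x. A x * B x + SP ps x) has_derivative
     (\<lambda>v. (frechet_derivative A (at x) v * B x + A x * frechet_derivative B (at x) v) +
        sum_list (map (\<lambda>(A,B). frechet_derivative A (at x) v * B x + A x * frechet_derivative B (at x) v) ps))) (at x)"
    using Cons.IH Cons.prems dA dB
    by (auto intro!: derivative_eq_intros simp: algebra_simps)
  ultimately show ?case by (simp add: p)
qed

lemma SP_aux: "sum_list (map (\<lambda>(A,B). pd A x j * B x + A x * pd B x j) ps) =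
   SP (concat (map (\<lambda>(A,B). [(\<lambda>x. pd A x j, B), (A, \<lambda>x. pd B x j)]) ps)) x"
  by (induction ps) (auto simp: SP_def)

lemma linear_fd_scale: "f differentiable at x \<Longrightarrow> frechet_derivative f (at x) (c *\<^sub>R v) = c *\<^sub>R frechet_derivative f (at x) v"
  using linear_frechet_derivative linear_scale by blast

lemma smooth_SP:
  fixes U :: "(real^'i) set"
  assumes U: "open U" and sm: "\<forall>(A,B)\<in>set ps. smooth_on U A \<and> smooth_on U B"
  shows "smooth_on U (SP ps)"
proof (rule smooth_coind[OF U, where P = "\<lambda>h. \<exists>ps. (\<forall>(A,B)\<in>set ps. smooth_on U A \<and> smooth_on U B) \<and> (\<forall>x\<in>U. h x = SP ps x)"])
  show "\<exists>ps'. (\<forall>(A,B)\<in>set ps'. smooth_on U A \<and> smooth_on U B) \<and> (\<forall>x\<in>U. SP ps x = SP ps' x)"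
    by (rule exI[of _ ps]) (use sm in simp)
  fix h assume "\<exists>ps. (\<forall>(A,B)\<in>set ps. smooth_on U A \<and> smooth_on U B) \<and> (\<forall>x\<in>U. h x = SP ps x)"
  then obtain ps where ps: "\<forall>(A,B)\<in>set ps. smooth_on U A \<and> smooth_on U B" "\<forall>x\<in>U. h x = SP ps x" by blast
  have diff: "\<forall>(A,B)\<in>set ps. A differentiable at x \<and> B differentiable at x" if "x \<in> U" for x
  proof (intro ballI, clarify)
    fix A B assume "(A,B) \<in> set ps"
    then have "smooth_on U A" "smooth_on U B" using ps(1) by auto
    then show "A differentiable at x \<and> B differentiable at x" using smooth_differentiable that by blast
  qed
  show "(\<forall>x\<in>U. h differentiable at x) \<and> (\<forall>j. \<exists>g'. (\<exists>ps. (\<forall>(A,B)\<in>set ps. smooth_on U A \<and> smooth_on U B) \<and> (\<forall>x\<in>U. g' x = SP ps x)) \<and> (\<forall>x\<in>U. pd h x j = g' x))"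
  proof (intro conjI allI ballI)
    fix x assume x: "x \<in> U"
    show "h differentiable at x"
    proof (rule diff_local[OF U x, of _ "SP ps"])
      show "SP ps differentiable at x" using SP_deriv[OF diff[OF x]] differentiable_def by blast
    qed (use ps in auto)
  next
    fix j
    define ps' where "ps' = concat (map (\<lambda>(A,B). [(\<lambda>x. pd A x j, B), (A, \<lambda>x. pd B x j)]) ps)"
    have sm': "\<forall>(A,B)\<in>set ps'. smooth_on U A \<and> smooth_on U B"
    proof (intro ballI, clarify)
      fix A' B' assume "(A',B') \<in> set ps'"
      then obtain A B where AB: "(A,B) \<in> set ps" and m: "(A',B') \<in> {(\<lambda>x. pd A x j, B), (A, \<lambda>x. pd B x j)}"
        unfolding ps'_def by auto
      have "smooth_on U A" "smooth_on U B" using ps(1) AB by auto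
      then show "smooth_on U A' \<and> smooth_on U B'" using m smooth_pd[OF U] by auto
    qed
    show "\<exists>g'. (\<exists>ps. (\<forall>(A,B)\<in>set ps. smooth_on U A \<and> smooth_on U B) \<and> (\<forall>x\<in>U. g' x = SP ps x)) \<and> (\<forall>x\<in>U. pd h x j = g' x)"
    proof (rule exI[of _ "SP ps'"], intro conjI ballI)
      show "\<exists>ps. (\<forall>(A,B)\<in>set ps. smooth_on U A \<and> smooth_on U B) \<and> (\<forall>x\<in>U. SP ps' x = SP ps x)"
        using sm' by blast
      fix x assume x: "x \<in> U"
      have "pd h x j = pd (SP ps) x j" by (rule pd_local[OF U x]) (use ps in auto)
      also have "\<dots> = sum_list (map (\<lambda>(A,B). pd A x j * B x + A x * pd B x j) ps)"
      proof -
        have "frechet_derivative (SP ps) (at x) = (\<lambda>v. sum_list (map (\<lambda>(A,B). frechet_derivative A (at x) v * B x + A x * frechet_derivative B (at x) v) ps))"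
          using frechet_derivative_at[OF SP_deriv[OF diff[OF x]]] by (rule sym)
        thus ?thesis unfolding pd_def by simp
      qed
      also have "\<dots> = SP ps' x"
        unfolding ps'_def by (rule SP_aux)
      finally show "pd h x j = SP ps' x" .
    qed
  qed
qed

lemma smooth_const: "smooth_on U (\<lambda>x. c)"
proof -
  have "ipd (\<lambda>x. c) is = (\<lambda>x. if is = [] then c else 0)" for "is"
    by (induction "is") (auto simp: pd_def)
  note e = this
  show ?thesis unfolding smooth_on_def
  proof (intro allI ballI)
    fix "is" x
    show "ipd (\<lambda>x. c) is differentiable at x"
    proof (cases "is")
      case Nil then show ?thesis by simp
    next
      case (Cons a l) then show ?thesis using e[of "is"] by simp
    qed
  qed
qed

lemma smooth_mult:
  fixes U :: "(real^'i) set" and A B :: "real^'i \<Rightarrow> real"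
  assumes "open U" "smooth_on U A" "smooth_on U B"
  shows "smooth_on U (\<lambda>x. A x * B x)"
proof -
  have "smooth_on U (SP [(A,B)])" using smooth_SP[of U "[(A,B)]"] assms by simp
  moreover have "SP [(A,B)] = (\<lambda>x. A x * B x)" by (simp add: SP_def fun_eq_iff)
  ultimately show ?thesis by simp
qed

lemma smooth_add:
  fixes U :: "(real^'i) set" and A B :: "real^'i \<Rightarrow> real"
  assumes "open U" "smooth_on U A" "smooth_on U B"
  shows "smooth_on U (\<lambda>x. A x + B x)"
proof -
  have "smooth_on U (SP [(A,\<lambda>x. 1),(B,\<lambda>x. 1)])" using smooth_SP[of U "[(A,\<lambda>x. 1),(B,\<lambda>x. 1)]"] assms smooth_const[of U 1] by simp
  moreover have "SP [(A,\<lambda>x. 1),(B,\<lambda>x. 1)] = (\<lambda>x. A x + B x)" by (simp add: SP_def fun_eq_iff)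
  ultimately show ?thesis by simp
qed

lemma smooth_sum:
  fixes U :: "(real^'i) set" and A :: "'s \<Rightarrow> real^'i \<Rightarrow> real"
  assumes "open U" "finite S" "\<And>s. s \<in> S \<Longrightarrow> smooth_on U (A s)"
  shows "smooth_on U (\<lambda>x. \<Sum>s\<in>S. A s x)"
  using assms(2,3)
proof (induction S rule: finite_induct)
  case empty then show ?case by (simp add: smooth_const)
next
  case (insert s S)
  then show ?case by (simp add: smooth_add[OF assms(1)])
qed

lemma smooth_prod:
  fixes U :: "(real^'i) set" and A :: "'s \<Rightarrow> real^'i \<Rightarrow> real"
  assumes "open U" "finite S" "\<And>s. s \<in> S \<Longrightarrow> smooth_on U (A s)"
  shows "smooth_on U (\<lambda>x. \<Prod>s\<in>S. A s x)"
  using assms(2,3)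
proof (induction S rule: finite_induct)
  case empty then show ?case by (simp add: smooth_const)
next
  case (insert s S)
  then show ?case by (simp add: smooth_mult[OF assms(1)])
qed

lemma smooth_coord: "smooth_on U (\<lambda>x::real^'i. x $ k)"
proof -
  have d: "pd (\<lambda>x::real^'i. x $ k) x j = (if j = k then 1 else 0)" for x j
  proof -
    have "((\<lambda>x::real^'i. x $ k) has_derivative (\<lambda>v. v $ k)) (at x)"
      using bounded_linear_vec_nth bounded_linear_imp_has_derivative by blast
    hence "frechet_derivative (\<lambda>x::real^'i. x $ k) (at x) = (\<lambda>v. v $ k)"
      by (rule frechet_derivative_at[symmetric])
    thus ?thesis unfolding pd_def by (simp add: axis_def)
  qed
  have "ipd (\<lambda>x::real^'i. x $ k) (i # is) = (\<lambda>x. if is = [] then (if i = k then 1 else 0) else 0)" for i "is"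
  proof (induction "is" arbitrary: i)
    case Nil then show ?case by (simp add: d)
  next
    case (Cons a "is") then show ?case by (simp add: pd_def)
  qed
  hence "ipd (\<lambda>x::real^'i. x $ k) is differentiable at x" for "is" x
  proof (cases "is")
    case Nil
    then show ?thesis using bounded_linear_imp_differentiable[OF bounded_linear_vec_nth] by simp
  next
    case (Cons a l)
    then show ?thesis using \<open>\<And>i is. ipd (\<lambda>x::real^'i. x $ k) (i # is) = _\<close>[of a l] by simp
  qed
  thus ?thesis unfolding smooth_on_def by blast
qed

lemma smooth_inverse:
  fixes U :: "(real^'i) set" and B :: "real^'i \<Rightarrow> real"
  assumes U: "open U" and B: "smooth_on U B" and nz: "\<And>x. x \<in> U \<Longrightarrow> B x \<noteq> 0"
  shows "smooth_on U (\<lambda>x. 1 / B x)"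
proof (rule smooth_coind[OF U, where P = "\<lambda>h. \<exists>(A::real^'i\<Rightarrow>real) n. smooth_on U A \<and> (\<forall>x\<in>U. h x = A x * (1 / B x)^n)"])
  show "\<exists>A n. smooth_on U A \<and> (\<forall>x\<in>U. 1 / B x = A x * (1 / B x)^n)"
    by (rule exI[of _ "\<lambda>x. 1"], rule exI[of _ 1]) (simp add: smooth_const)
  fix h assume "\<exists>A n. smooth_on U A \<and> (\<forall>x\<in>U. h x = A x * (1 / B x)^n)"
  then obtain A n where A: "smooth_on U A" "\<forall>x\<in>U. h x = A x * (1 / B x)^n" by blast
  have dd: "((\<lambda>x. A x * (1 / B x)^n) has_derivative
      (\<lambda>v. (frechet_derivative A (at x) v * B x - real n * A x * frechet_derivative B (at x) v) * (1 / B x)^(n+1))) (at x)"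
    if x: "x \<in> U" for x
  proof -
    have dA: "(A has_derivative frechet_derivative A (at x)) (at x)" and dB: "(B has_derivative frechet_derivative B (at x)) (at x)"
      using A B x smooth_differentiable frechet_derivative_works by blast+
    have Bx: "B x \<noteq> 0" using nz x .
    show ?thesis
      using dA dB Bx
      apply (auto intro!: derivative_eq_intros)
      apply (rule ext)
      apply (cases n)
       apply (simp_all add: divide_simps)
      done
  qed
  show "(\<forall>x\<in>U. h differentiable at x) \<and> (\<forall>j. \<exists>g'. (\<exists>A n. smooth_on U A \<and> (\<forall>x\<in>U. g' x = A x * (1 / B x)^n)) \<and> (\<forall>x\<in>U. pd h x j = g' x))"
  proof (intro conjI allI ballI)
    fix x assume x: "x \<in> U"
    show "h differentiable at x"
      by (rule diff_local[OF U x, of _ "\<lambda>x. A x * (1 / B x)^n"]) (use A dd[OF x] differentiable_def in auto)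
  next
    fix j
    define A' where "A' x = pd A x j * B x + (- real n) * (A x * pd B x j)" for x
    have smA': "smooth_on U A'"
      unfolding A'_def
      by (intro smooth_add smooth_mult U smooth_pd A B smooth_const)
    show "\<exists>g'. (\<exists>A n. smooth_on U A \<and> (\<forall>x\<in>U. g' x = A x * (1 / B x)^n)) \<and> (\<forall>x\<in>U. pd h x j = g' x)"
    proof (rule exI[of _ "\<lambda>x. A' x * (1 / B x)^(n+1)"], intro conjI ballI)
      show "\<exists>A n'. smooth_on U A \<and> (\<forall>x\<in>U. A' x * (1 / B x)^(n+1) = A x * (1 / B x)^n')"
        using smA' by blast
      fix x assume x: "x \<in> U"
      have "pd h x j = pd (\<lambda>x. A x * (1 / B x)^n) x j" by (rule pd_local[OF U x]) (use A in auto)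
      also have "\<dots> = A' x * (1 / B x)^(n+1)"
      proof -
        have "frechet_derivative (\<lambda>x. A x * (1 / B x)^n) (at x) = (\<lambda>v. (frechet_derivative A (at x) v * B x - real n * A x * frechet_derivative B (at x) v) * (1 / B x)^(n+1))"
          by (rule frechet_derivative_at[OF dd[OF x], symmetric])
        thus ?thesis unfolding pd_def A'_def by simp
      qed
      finally show "pd h x j = A' x * (1 / B x)^(n+1)" .
    qed
  qed
qed




lemma smooth_via_pd:
  fixes h :: "real^'i \<Rightarrow> real"
  assumes U: "open U" and d: "\<And>x. x \<in> U \<Longrightarrow> h differentiable at x"
    and p: "\<And>j. smooth_on U (\<lambda>x. pd h x j)"
  shows "smooth_on U h"
proof (rule smooth_coind[OF U, where P = "\<lambda>g. g = h \<or> smooth_on U g"])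
  fix g assume "g = h \<or> smooth_on U g"
  then show "(\<forall>x\<in>U. g differentiable at x) \<and> (\<forall>j. \<exists>g'. (g' = h \<or> smooth_on U g') \<and> (\<forall>x\<in>U. pd g x j = g' x))"
  proof
    assume "g = h" then show ?thesis using d p by blast
  next
    assume g: "smooth_on U g"
    show ?thesis using g smooth_differentiable smooth_pd[OF U g] by blast
  qed
qed simp

lemma smooth_ln_coord:
  fixes U :: "(real^'i) set"
  assumes U: "open U" and pos: "\<And>x. x \<in> U \<Longrightarrow> x $ c > 0"
  shows "smooth_on U (\<lambda>x. ln (x $ c))"
proof (rule smooth_via_pd[OF U])
  have dd: "((\<lambda>x. ln (x $ c)) has_derivative (\<lambda>v. v $ c / x $ c)) (at x)" if "x \<in> U" for x
    using pos[OF that] bounded_linear_imp_has_derivative[OF bounded_linear_vec_nth[of c], of "at x"]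
    by (auto intro!: derivative_eq_intros simp: field_simps)
  fix x assume "x \<in> U" then show "(\<lambda>x. ln (x $ c)) differentiable at x" using dd differentiable_def by blast
next
  fix j
  have sm: "smooth_on U (\<lambda>x. (if j = c then 1 else 0) * (1 / x $ c))"
    by (intro smooth_mult U smooth_const smooth_inverse smooth_coord) (use pos in force)
  show "smooth_on U (\<lambda>x. pd (\<lambda>x. ln (x $ c)) x j)"
  proof (rule smooth_local[OF U sm])
    fix x assume x: "x \<in> U"
    have dd: "((\<lambda>x. ln (x $ c)) has_derivative (\<lambda>v. v $ c / x $ c)) (at x)"
      using pos[OF x] bounded_linear_imp_has_derivative[OF bounded_linear_vec_nth[of c], of "at x"]
      by (auto intro!: derivative_eq_intros simp: field_simps)
    have "frechet_derivative (\<lambda>x. ln (x $ c)) (at x) = (\<lambda>v. v $ c / x $ c)"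
      by (rule frechet_derivative_at[OF dd, symmetric])
    thus "(if j = c then 1 else 0) * (1 / x $ c) = pd (\<lambda>x. ln (x $ c)) x j"
      by (simp add: pd_def axis_def)
  qed
qed

lemma smooth_det:
  fixes U :: "(real^'i) set" and M :: "real^'i \<Rightarrow> real^'k^'k"
  assumes U: "open U" and sm: "\<And>i j. smooth_on U (\<lambda>x. M x $ i $ j)"
  shows "smooth_on U (\<lambda>x. det (M x))"
  unfolding det_def
  by (intro smooth_sum smooth_mult smooth_prod U smooth_const sm finite_permutations finite_UNIV) auto




lemma bounded_linear_pi: "bounded_linear (\<lambda>w::real^'n. (\<chi> i. w $ (\<sigma> (Some i) :: 'n)) :: real^'m)"
proof -
  have "linear (\<lambda>w::real^'n. (\<chi> i. w $ (\<sigma> (Some i) :: 'n)) :: real^'m)"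
    by (rule linearI) (simp_all add: vec_eq_iff)
  thus ?thesis by (simp add: linear_conv_bounded_linear)
qed

lemma pi_axis:
  fixes \<sigma> :: "'m::finite option \<Rightarrow> 'n::finite"
  assumes bij: "bij \<sigma>"
  shows "((\<chi> i. axis j (1::real) $ \<sigma> (Some i)) :: real^'m) =
     (case inv \<sigma> j of None \<Rightarrow> 0 | Some i \<Rightarrow> axis i 1)"
proof -
  have sj: "\<sigma> (inv \<sigma> j) = j" using bij by (simp add: bij_is_surj surj_f_inv_f)
  have inj: "inj \<sigma>" using bij bij_is_inj by blast
  show ?thesis
  proof (cases "inv \<sigma> j")
    case None
    have "\<sigma> (Some i) \<noteq> j" for i using sj None inj by (metis injD option.distinct(1))
    then show ?thesis using None by (simp add: vec_eq_iff axis_def)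
  next
    case (Some i0)
    have "\<sigma> (Some i) = j \<longleftrightarrow> i = i0" for i using sj Some inj by (metis injD option.inject)
    then show ?thesis using Some by (simp add: vec_eq_iff axis_def)
  qed
qed

lemma smooth_compose_pi:
  fixes h :: "real^'m \<Rightarrow> real" and \<sigma> :: "'m::finite option \<Rightarrow> 'n::finite"
  assumes bij: "bij \<sigma>" and U: "open U" and sm: "smooth_on U h"
  shows "smooth_on {w. ((\<chi> i. w $ \<sigma> (Some i)) :: real^'m) \<in> U} (\<lambda>w. h (\<chi> i. w $ \<sigma> (Some i)))"
proof -
  define \<pi> where "\<pi> = (\<lambda>w::real^'n. (\<chi> i. w $ \<sigma> (Some i)) :: real^'m)"
  have bl: "bounded_linear \<pi>" unfolding \<pi>_def by (rule bounded_linear_pi)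
  have dpi: "(\<pi> has_derivative \<pi>) (at w)" for w using bl bounded_linear_imp_has_derivative by blast
  define Ob where "Ob = {w. \<pi> w \<in> U}"
  have Ob: "open Ob" unfolding Ob_def
    using continuous_open_vimage[OF U, of \<pi>] linear_continuous_at[OF bl] by (simp add: vimage_def)
  have "smooth_on Ob (\<lambda>w. h (\<pi> w))"
  proof (rule smooth_coind[OF Ob, where P = "\<lambda>g. \<exists>h'. smooth_on U h' \<and> (\<forall>w\<in>Ob. g w = h' (\<pi> w))"])
    show "\<exists>h'. smooth_on U h' \<and> (\<forall>w\<in>Ob. h (\<pi> w) = h' (\<pi> w))" using sm by blast
    fix g assume "\<exists>h'. smooth_on U h' \<and> (\<forall>w\<in>Ob. g w = h' (\<pi> w))"
    then obtain h' where h': "smooth_on U h'" "\<forall>w\<in>Ob. g w = h' (\<pi> w)" by blast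
    have dd: "((\<lambda>w. h' (\<pi> w)) has_derivative (\<lambda>v. frechet_derivative h' (at (\<pi> w)) (\<pi> v))) (at w)"
      if w: "w \<in> Ob" for w
    proof -
      have "(h' has_derivative frechet_derivative h' (at (\<pi> w))) (at (\<pi> w))"
        using h'(1) smooth_differentiable w frechet_derivative_works unfolding Ob_def by blast
      from has_derivative_compose[OF dpi this] show ?thesis by simp
    qed
    show "(\<forall>x\<in>Ob. g differentiable at x) \<and> (\<forall>j. \<exists>g'. (\<exists>h'. smooth_on U h' \<and> (\<forall>w\<in>Ob. g' w = h' (\<pi> w))) \<and> (\<forall>x\<in>Ob. pd g x j = g' x))"
    proof (intro conjI allI ballI)
      fix x assume x: "x \<in> Ob"
      show "g differentiable at x"
      proof (rule diff_local[OF Ob x, of _ "\<lambda>w. h' (\<pi> w)"])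
        show "(\<lambda>w. h' (\<pi> w)) differentiable at x" using dd[OF x] differentiable_def by blast
      qed (use h' in auto)
    next
      fix j
      define h'' where "h'' = (case inv \<sigma> j of None \<Rightarrow> (\<lambda>x. 0) | Some i \<Rightarrow> (\<lambda>x. pd h' x i))"
      have smh'': "smooth_on U h''" unfolding h''_def
        by (cases "inv \<sigma> j") (auto intro: smooth_const smooth_pd[OF U h'(1)])
      show "\<exists>g'. (\<exists>h'. smooth_on U h' \<and> (\<forall>w\<in>Ob. g' w = h' (\<pi> w))) \<and> (\<forall>x\<in>Ob. pd g x j = g' x)"
      proof (rule exI[of _ "\<lambda>w. h'' (\<pi> w)"], intro conjI ballI)
        show "\<exists>h'. smooth_on U h' \<and> (\<forall>w\<in>Ob. h'' (\<pi> w) = h' (\<pi> w))" using smh'' by blast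
        fix x assume x: "x \<in> Ob"
        have "pd g x j = pd (\<lambda>w. h' (\<pi> w)) x j" by (rule pd_local[OF Ob x]) (use h' in auto)
        also have "\<dots> = frechet_derivative h' (at (\<pi> x)) (\<pi> (axis j 1))"
        proof -
          have "frechet_derivative (\<lambda>w. h' (\<pi> w)) (at x) = (\<lambda>v. frechet_derivative h' (at (\<pi> x)) (\<pi> v))"
            by (rule frechet_derivative_at[OF dd[OF x], symmetric])
          thus ?thesis by (simp add: pd_def)
        qed
        also have "\<dots> = h'' (\<pi> x)"
        proof -
          have hd: "h' differentiable at (\<pi> x)" using h'(1) smooth_differentiable x unfolding Ob_def by blast
          have l0: "frechet_derivative h' (at (\<pi> x)) 0 = 0"
            using linear_0[OF linear_frechet_derivative[OF hd]] .
          have pa: "\<pi> (axis j 1) = (case inv \<sigma> j of None \<Rightarrow> 0 | Some i \<Rightarrow> axis i 1)"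
            using pi_axis[OF bij, of j] unfolding \<pi>_def by simp
          show ?thesis unfolding h''_def pa
            by (cases "inv \<sigma> j") (simp_all add: pd_def l0)
        qed
        finally show "pd g x j = h'' (\<pi> x)" .
      qed
    qed
  qed
  thus ?thesis unfolding Ob_def \<pi>_def by simp
qed




lemma fd_expand:
  fixes F :: "real^'i \<Rightarrow> 'b::real_normed_vector"
  assumes "F differentiable at w"
  shows "frechet_derivative F (at w) x = (\<Sum>k\<in>UNIV. x $ k *\<^sub>R pd F w k)"
proof -
  have "frechet_derivative F (at w) x = frechet_derivative F (at w) (\<Sum>k\<in>UNIV. x $ k *\<^sub>R axis k 1)"
    by (metis (no_types) basis_expansion scalar_mult_eq_scaleR)
  also have "\<dots> = (\<Sum>k\<in>UNIV. x $ k *\<^sub>R frechet_derivative F (at w) (axis k 1))"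
    using linear_frechet_derivative[OF assms] by (simp add: linear_sum linear_scale)
  finally show ?thesis by (simp add: pd_def)
qed

lemma main_analytic:
  fixes U :: "(real^'m) set"
    and f :: "real^'m \<Rightarrow> real^'n"
    and \<xi>0 :: "real^'m" and lam0 :: real
    and N :: "((real^'m) \<times> real) set"
    and G :: "real^'n \<Rightarrow> real"
  assumes dim: "CARD('n) = CARD('m) + 1"
    and imm: "centroaffine_immersion U f"
    and y: "\<xi>0 \<in> U" "lam0 > 0"
    and N: "open N" "(\<xi>0, lam0) \<in> N" "N \<subseteq> U \<times> {0<..}"
    and G: "\<forall>(\<xi>, t)\<in>N. G (t *\<^sub>R f \<xi>) = ln t"
  shows "\<exists>V \<rho> \<delta>. open V \<and> lam0 *\<^sub>R f \<xi>0 \<in> V \<and> smooth_on V G \<and> 0 < \<rho> \<and> 0 < \<delta> \<and> \<delta> < 1 \<and>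
     ball (lam0 *\<^sub>R f \<xi>0) \<rho> \<subseteq> V \<and>
     (\<forall>z t. z \<in> ball (lam0 *\<^sub>R f \<xi>0) \<rho> \<longrightarrow> \<bar>t - 1\<bar> < \<delta> \<longrightarrow> t *\<^sub>R z \<in> V \<and> G (t *\<^sub>R z) = G z + ln t)"
proof -
  have U: "open U" and smf: "smooth_on U f"
    and injD: "\<And>\<xi>. \<xi> \<in> U \<Longrightarrow> inj (frechet_derivative f (at \<xi>))"
    and trans: "\<And>\<xi>. \<xi> \<in> U \<Longrightarrow> f \<xi> \<notin> range (frechet_derivative f (at \<xi>))"
    using imm unfolding centroaffine_immersion_def by auto
  obtain \<sigma> :: "'m option \<Rightarrow> 'n" where bij: "bij \<sigma>"
  proof -
    have "card (UNIV :: 'm option set) = card (UNIV :: 'n set)" using dim by simp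
    then obtain h :: "'m option \<Rightarrow> 'n" where "bij_betw h UNIV UNIV"
      using finite_same_card_bij[of "UNIV :: 'm option set" "UNIV :: 'n set"] by auto
    then show ?thesis using that by blast
  qed
  have inj\<sigma>: "inj \<sigma>" using bij bij_is_inj by blast
  have inv\<sigma>: "inv \<sigma> (\<sigma> x) = x" for x using inj\<sigma> by simp
  have \<sigma>inv: "\<sigma> (inv \<sigma> j) = j" for j using bij by (simp add: bij_is_surj surj_f_inv_f)
  define c where "c = \<sigma> None"
  define \<pi> where "\<pi> = (\<lambda>w::real^'n. (\<chi> i. w $ \<sigma> (Some i)) :: real^'m)"
  define \<Psi> where "\<Psi> = (\<lambda>w. (w $ c) *\<^sub>R f (\<pi> w))"
  define Df where "Df = (\<lambda>\<xi>. frechet_derivative f (at \<xi>))"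
  define D where "D = (\<lambda>w v. (v $ c) *\<^sub>R f (\<pi> w) + (w $ c) *\<^sub>R (\<Sum>k\<in>UNIV. (\<pi> v) $ k *\<^sub>R pd f (\<pi> w) k))"
  define w0 :: "real^'n" where "w0 = (\<chi> j. case inv \<sigma> j of None \<Rightarrow> lam0 | Some i \<Rightarrow> \<xi>0 $ i)"
  have \<pi>w0: "\<pi> w0 = \<xi>0" by (simp add: \<pi>_def w0_def inv\<sigma> vec_eq_iff)
  have cw0: "w0 $ c = lam0" by (simp add: c_def w0_def inv\<sigma>)
  have y_eq: "lam0 *\<^sub>R f \<xi>0 = \<Psi> w0" by (simp add: \<Psi>_def \<pi>w0 cw0)
  have bl\<pi>: "bounded_linear \<pi>" unfolding \<pi>_def by (rule bounded_linear_pi)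
  have \<pi>_axis: "\<pi> (axis j 1) = (case inv \<sigma> j of None \<Rightarrow> 0 | Some i \<Rightarrow> axis i 1)" for j
    using pi_axis[OF bij, of j] unfolding \<pi>_def by simp
  define Ob where "Ob = {w. (\<pi> w, w $ c) \<in> N}"
  have Ob: "open Ob"
  proof -
    have "continuous (at x) (\<lambda>w. (\<pi> w, w $ c))" for x
      by (intro continuous_Pair linear_continuous_at bl\<pi> bounded_linear_vec_nth)
    thus ?thesis unfolding Ob_def using continuous_open_vimage[OF N(1), of "\<lambda>w. (\<pi> w, w $ c)"]
      by (simp add: vimage_def)
  qed
  have w0Ob: "w0 \<in> Ob" using N(2) by (simp add: Ob_def \<pi>w0 cw0)
  have ObU: "\<pi> w \<in> U" and Obc: "w $ c > 0" if "w \<in> Ob" for w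
    using that N(3) unfolding Ob_def by auto
  have GPsi: "G (\<Psi> w) = ln (w $ c)" if "w \<in> Ob" for w
    using that G unfolding Ob_def \<Psi>_def by auto
  have fdiff: "f differentiable at \<xi>" if "\<xi> \<in> U" for \<xi> using smooth_differentiable[OF smf that] .
  have linDf: "linear (Df \<xi>)" if "\<xi> \<in> U" for \<xi> unfolding Df_def by (rule linear_frechet_derivative[OF fdiff[OF that]])
  have Dfexp: "Df \<xi> x = (\<Sum>k\<in>UNIV. x $ k *\<^sub>R pd f \<xi> k)" if "\<xi> \<in> U" for \<xi> x
  proof -
    have "Df \<xi> x = Df \<xi> (\<Sum>k\<in>UNIV. x $ k *\<^sub>R axis k 1)"
      by (metis (no_types) basis_expansion scalar_mult_eq_scaleR)
    also have "\<dots> = (\<Sum>k\<in>UNIV. x $ k *\<^sub>R Df \<xi> (axis k 1))"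
      using linDf[OF that] by (simp add: linear_sum linear_scale)
    finally show ?thesis by (simp add: pd_def Df_def)
  qed
  have Deq: "D w v = (v $ c) *\<^sub>R f (\<pi> w) + (w $ c) *\<^sub>R Df (\<pi> w) (\<pi> v)" if "w \<in> Ob" for w v
    using Dfexp[OF ObU[OF that]] by (simp add: D_def)
  have derPsi: "(\<Psi> has_derivative D w) (at w)" if w: "w \<in> Ob" for w
  proof -
    have hf: "(f has_derivative Df (\<pi> w)) (at (\<pi> w))"
      using fdiff[OF ObU[OF w]] frechet_derivative_works unfolding Df_def by blast
    have hfp: "((\<lambda>w. f (\<pi> w)) has_derivative (\<lambda>v. Df (\<pi> w) (\<pi> v))) (at w)"
      using has_derivative_compose[OF bounded_linear_imp_has_derivative[OF bl\<pi>] hf] by simp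
    have hc: "((\<lambda>w. w $ c) has_derivative (\<lambda>v. v $ c)) (at w)"
      by (rule bounded_linear_imp_has_derivative[OF bounded_linear_vec_nth])
    have "D w = (\<lambda>v. (v $ c) *\<^sub>R f (\<pi> w) + (w $ c) *\<^sub>R Df (\<pi> w) (\<pi> v))"
      using Deq[OF w] by blast
    then show ?thesis unfolding \<Psi>_def
      using has_derivative_scaleR[OF hc hfp] by (simp add: algebra_simps)
  qed
  have blD: "bounded_linear (D w)" for w
  proof -
    have "linear (D w)" unfolding D_def
      by (rule linearI) (simp_all add: linear_add[OF bounded_linear.linear[OF bl\<pi>]]
         linear_scale[OF bounded_linear.linear[OF bl\<pi>]] algebra_simps sum.distrib scaleR_sum_right)
    thus ?thesis by (simp add: linear_conv_bounded_linear)
  qed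
  have D_inj0: "D w0 v = 0 \<Longrightarrow> v = 0" for v
  proof -
    assume D0: "D w0 v = 0"
    have U0: "\<xi>0 \<in> U" using y(1) .
    have vc: "v $ c = 0"
    proof (rule ccontr)
      assume nz: "v $ c \<noteq> 0"
      have "f \<xi>0 = Df \<xi>0 (- (lam0 / v $ c) *\<^sub>R \<pi> v)"
      proof -
        have "(v $ c) *\<^sub>R f \<xi>0 = - (lam0 *\<^sub>R Df \<xi>0 (\<pi> v))" using D0 Deq[OF w0Ob, of v] by (simp add: \<pi>w0 cw0 add_eq_0_iff)
        hence "f \<xi>0 = - (lam0 / v $ c) *\<^sub>R Df \<xi>0 (\<pi> v)" using nz
          by (simp add: field_simps) (metis (no_types, lifting) nz scaleR_right.minus scaleR_scaleR divide_inverse_commute right_inverse scaleR_one mult.commute)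
        thus ?thesis using linDf[OF U0] by (simp add: linear_scale linear_neg)
      qed
      thus False using trans[OF U0] unfolding Df_def by auto
    qed
    hence "lam0 *\<^sub>R Df \<xi>0 (\<pi> v) = 0" using D0 Deq[OF w0Ob, of v] by (simp add: \<pi>w0 cw0)
    hence "Df \<xi>0 (\<pi> v) = 0" using y(2) by simp
    hence "Df \<xi>0 (\<pi> v) = Df \<xi>0 0" using linear_0[OF linDf[OF U0]] by simp
    hence pv: "\<pi> v = 0" using injD[OF U0] unfolding Df_def by (simp add: inj_eq)
    show "v = 0"
    proof (subst vec_eq_iff, rule allI)
      fix j show "v $ j = 0 $ j"
      proof (cases "inv \<sigma> j")
        case None then have "j = c" using \<sigma>inv[of j] c_def by simp
        then show ?thesis using vc by simp
      next
        case (Some i) then have "j = \<sigma> (Some i)" using \<sigma>inv[of j] by simp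
        then show ?thesis using pv by (simp add: \<pi>_def vec_eq_iff)
      qed
    qed
  qed
  have axc: "(axis j 1 :: real^'n) $ c = (if j = c then 1 else 0)" for j by (simp add: axis_def)
  have Dax: "D w (axis j 1) = (if j = c then f (\<pi> w) else 0) + (w $ c) *\<^sub>R
       (case inv \<sigma> j of None \<Rightarrow> 0 | Some i \<Rightarrow> pd f (\<pi> w) i)" for w j
  proof (cases "inv \<sigma> j")
    case None then show ?thesis by (simp add: D_def \<pi>_axis axc)
  next
    case (Some i)
    have "(\<Sum>k\<in>UNIV. axis i 1 $ k *\<^sub>R pd f (\<pi> w) k) = pd f (\<pi> w) i"
    proof -
      have "(\<Sum>k\<in>UNIV. axis i 1 $ k *\<^sub>R pd f (\<pi> w) k) = (\<Sum>k\<in>UNIV. if k = i then pd f (\<pi> w) k else 0)"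
        by (rule sum.cong) (auto simp: axis_def)
      thus ?thesis by simp
    qed
    then show ?thesis using Some by (simp add: D_def \<pi>_axis axc)
  qed
  have contf: "continuous_on U f" using fdiff differentiable_imp_continuous_on differentiable_on_def
    by (metis at_within_open U differentiable_at_withinI)
  have contpd: "continuous_on U (\<lambda>\<xi>. pd f \<xi> i)" for i
  proof -
    have "smooth_on U (\<lambda>\<xi>. pd f \<xi> i)" using smooth_pd[OF U smf] .
    then show ?thesis using smooth_differentiable differentiable_imp_continuous_on differentiable_on_def
      by (metis differentiable_at_withinI)
  qed
  have cont\<pi>: "continuous_on Ob \<pi>" using linear_continuous_on[OF bl\<pi>] .
  have \<pi>Ob: "\<pi> ` Ob \<subseteq> U" using ObU by blast
  have contD: "continuous_on Ob (\<lambda>w. D w (axis j 1))" for j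
  proof -
    have c1: "continuous_on Ob (\<lambda>w. f (\<pi> w))" by (rule continuous_on_compose2[OF contf cont\<pi> \<pi>Ob])
    have c2: "continuous_on Ob (\<lambda>w. pd f (\<pi> w) i)" for i by (rule continuous_on_compose2[OF contpd cont\<pi> \<pi>Ob])
    have c3: "continuous_on Ob (\<lambda>w. w $ c)" by (intro continuous_intros)
    show ?thesis unfolding Dax
      by (cases "inv \<sigma> j"; cases "j = c") (auto intro!: continuous_intros c1 c2 c3)
  qed
  define f' where "f' = (\<lambda>w. Blinfun (D w))"
  have f'app: "blinfun_apply (f' w) = D w" for w unfolding f'_def using bounded_linear_Blinfun_apply[OF blD] .
  have contf': "continuous_on Ob f'"
    unfolding continuous_on_eq_continuous_within
  proof
    fix w assume "w \<in> Ob"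
    show "continuous (at w within Ob) f'"
    proof (rule continuous_blinfun_componentwiseI1)
      fix i :: "real^'n" assume "i \<in> Basis"
      then obtain j where i: "i = axis j 1" by (auto simp: Basis_vec_def)
      show "continuous (at w within Ob) (\<lambda>x. blinfun_apply (f' x) i)"
        unfolding f'app i using contD[of j] \<open>w \<in> Ob\<close> continuous_on_eq_continuous_within by blast
    qed
  qed
  have linD0: "linear (D w0)" using blD bounded_linear.linear by blast
  have injD0: "inj (D w0)"
    using D_inj0 linear_injective_0[OF linD0] by blast
  define invf where "invf = Blinfun (inv (D w0))"
  have blinv: "bounded_linear (inv (D w0))" using inj_linear_imp_inv_bounded_linear[OF blD injD0] .
  have invf: "invf o\<^sub>L f' w0 = id_blinfun"
    by (rule blinfun_eqI) (simp add: invf_def f'app bounded_linear_Blinfun_apply[OF blinv] inv_f_f[OF injD0])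
  have derf: "(\<Psi> has_derivative blinfun_apply (f' x)) (at x)" if "x \<in> Ob" for x
    using derPsi[OF that] by (simp add: f'app)
  obtain U' V g g' where U': "open U'" "U' \<subseteq> Ob" "w0 \<in> U'" and V: "open V" "\<Psi> w0 \<in> V"
    and hom: "homeomorphism U' V \<Psi> g"
    and gder: "\<And>z. z \<in> V \<Longrightarrow> (g has_derivative (g' z)) (at z)"
    and g'eq: "\<And>z. z \<in> V \<Longrightarrow> g' z = inv (blinfun_apply (f' (g z)))"
    and gbij: "\<And>z. z \<in> V \<Longrightarrow> bij (blinfun_apply (f' (g z)))"
  proof (rule inverse_function_theorem[OF Ob derf contf' w0Ob invf])
    fix U'' V' g'' g1
    assume "open U''" "U'' \<subseteq> Ob" "w0 \<in> U''" "open V'" "\<Psi> w0 \<in> V'" "homeomorphism U'' V' \<Psi> g''"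
      "\<And>z. z \<in> V' \<Longrightarrow> (g'' has_derivative g1 z) (at z)"
      "\<And>z. z \<in> V' \<Longrightarrow> g1 z = inv (blinfun_apply (f' (g'' z)))"
      "\<And>z. z \<in> V' \<Longrightarrow> bij (blinfun_apply (f' (g'' z)))"
    then show thesis by (rule that)
  qed
  have gPsi: "g (\<Psi> w) = w" if "w \<in> U'" for w using hom that unfolding homeomorphism_def by blast
  have Psig: "\<Psi> (g z) = z" if "z \<in> V" for z using hom that unfolding homeomorphism_def by blast
  have gV: "g z \<in> U'" if "z \<in> V" for z using hom that unfolding homeomorphism_def by blast
  have PsiU': "\<Psi> w \<in> V" if "w \<in> U'" for w using hom that unfolding homeomorphism_def by blast
  have contg: "continuous_on V g" using hom unfolding homeomorphism_def by blast
  have bijD: "bij (D w)" if "w \<in> U'" for w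
    using gbij[OF PsiU'[OF that]] by (simp add: f'app gPsi[OF that])
  define J where "J w = matrix (D w)" for w
  have Jent: "J w $ k $ l = D w (axis l 1) $ k" for w k l by (simp add: J_def matrix_def)
  have linD: "linear (D w)" for w using blD bounded_linear.linear by blast
  have detJ: "det (J w) \<noteq> 0" if "w \<in> U'" for w
    unfolding J_def using det_nz_iff_inj[OF linD[of w]] bijD[OF that] bij_is_inj by blast
  have cram: "inv (D w) (axis j 1) $ k = det (\<chi> i l. if l = k then (axis j 1 :: real^'n) $ i else J w $ i $ l) / det (J w)"
    if w: "w \<in> U'" for w j k
  proof -
    have "D w (inv (D w) (axis j 1)) = axis j 1" using bijD[OF w] by (simp add: bij_is_surj surj_f_inv_f)
    hence "J w *v inv (D w) (axis j 1) = axis j 1" unfolding J_def using matrix_vector_mul(2)[OF linD[of w]]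
      by metis
    hence "inv (D w) (axis j 1) = (\<chi> k. det (\<chi> i l. if l = k then (axis j 1 :: real^'n) $ i else J w $ i $ l) / det (J w))"
      using cramer[OF detJ[OF w]] by blast
    thus ?thesis by simp
  qed
  have smE: "smooth_on Ob (\<lambda>w. J w $ k $ l)" for k l
  proof -
    have sfk: "smooth_on Ob (\<lambda>w. f (\<pi> w) $ k)"
      using smooth_subset[OF smooth_compose_pi[OF bij U smooth_component[OF U smf, of k]]] ObU
      unfolding \<pi>_def by blast
    have spk: "smooth_on Ob (\<lambda>w. pd f (\<pi> w) i $ k)" for i
      using smooth_subset[OF smooth_compose_pi[OF bij U smooth_component[OF U smooth_pd[OF U smf, of i], of k]]] ObU
      unfolding \<pi>_def by blast
    have e: "J w $ k $ l = (if l = c then f (\<pi> w) $ k else 0) + w $ c *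
       (case inv \<sigma> l of None \<Rightarrow> 0 | Some i \<Rightarrow> pd f (\<pi> w) i $ k)" for w
      unfolding Jent Dax by (cases "inv \<sigma> l") auto
    show ?thesis unfolding e
      by (cases "inv \<sigma> l"; cases "l = c") (auto intro!: smooth_add smooth_mult Ob smooth_const smooth_coord sfk spk)
  qed
  have smE': "smooth_on U' (\<lambda>w. J w $ k $ l)" for k l using smooth_subset[OF smE U'(2)] .
  have U'Ob: "w \<in> Ob" if "w \<in> U'" for w using U'(2) that by blast
  have smG: "smooth_on V G"
  proof (rule smooth_coind[OF V(1), where h = G and P = "\<lambda>h. \<exists>B::real^'n\<Rightarrow>real. smooth_on U' B \<and> (\<forall>z\<in>V. h z = B (g z))"])
    show "\<exists>B. smooth_on U' B \<and> (\<forall>z\<in>V. G z = B (g z))"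
    proof (intro exI conjI ballI)
      show "smooth_on U' (\<lambda>w. ln (w $ c))" by (rule smooth_ln_coord[OF U'(1)]) (use Obc U'Ob in blast)
      fix z assume z: "z \<in> V"
      have "G z = G (\<Psi> (g z))" using Psig[OF z] by simp
      also have "\<dots> = ln (g z $ c)" using GPsi[OF U'Ob[OF gV[OF z]]] .
      finally show "G z = ln (g z $ c)" .
    qed
  next
    fix h :: "real^'n \<Rightarrow> real" assume "\<exists>B. smooth_on U' B \<and> (\<forall>z\<in>V. h z = B (g z))"
    then obtain B where B: "smooth_on U' B" "\<forall>z\<in>V. h z = B (g z)" by blast
    have dd: "((\<lambda>z. B (g z)) has_derivative (\<lambda>v. frechet_derivative B (at (g z)) (inv (D (g z)) v))) (at z)"
      if z: "z \<in> V" for z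
    proof -
      have hB: "(B has_derivative frechet_derivative B (at (g z))) (at (g z))"
        using smooth_differentiable[OF B(1) gV[OF z]] frechet_derivative_works by blast
      have "(g has_derivative inv (D (g z))) (at z)" using gder[OF z] g'eq[OF z] by (simp add: f'app)
      from has_derivative_compose[OF this hB] show ?thesis .
    qed
    show "(\<forall>x\<in>V. h differentiable at x) \<and> (\<forall>j. \<exists>g'. (\<exists>B. smooth_on U' B \<and> (\<forall>z\<in>V. g' z = B (g z))) \<and> (\<forall>x\<in>V. pd h x j = g' x))"
    proof (intro conjI allI ballI)
      fix x assume x: "x \<in> V"
      show "h differentiable at x"
      proof (rule diff_local[OF V(1) x, of _ "\<lambda>z. B (g z)"])
        show "(\<lambda>z. B (g z)) differentiable at x" using dd[OF x] differentiable_def by blast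
      qed (use B in auto)
    next
      fix j
      define B' where "B' w = (\<Sum>k\<in>UNIV. pd B w k * (det (\<chi> i l. if l = k then (axis j 1 :: real^'n) $ i else J w $ i $ l) * (1 / det (J w))))" for w
      have smB': "smooth_on U' B'"
        unfolding B'_def
      proof (intro smooth_sum smooth_mult smooth_pd U'(1) B(1) smooth_det smooth_inverse finite_UNIV)
        fix k i l
        show "smooth_on U' (\<lambda>w. (\<chi> i l. if l = k then (axis j 1 :: real^'n) $ i else J w $ i $ l) $ i $ l)"
          by (cases "l = k") (simp_all add: smooth_const smE')
      next
        fix i l show "smooth_on U' (\<lambda>w. J w $ i $ l)" by (rule smE')
      next
        fix w assume "w \<in> U'" then show "det (J w) \<noteq> 0" by (rule detJ)
      qed simp
      show "\<exists>g'. (\<exists>B. smooth_on U' B \<and> (\<forall>z\<in>V. g' z = B (g z))) \<and> (\<forall>x\<in>V. pd h x j = g' x)"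
      proof (rule exI[of _ "\<lambda>z. B' (g z)"], intro conjI ballI)
        show "\<exists>B. smooth_on U' B \<and> (\<forall>z\<in>V. B' (g z) = B (g z))" using smB' by blast
        fix x assume x: "x \<in> V"
        have "pd h x j = pd (\<lambda>z. B (g z)) x j" by (rule pd_local[OF V(1) x]) (use B in auto)
        also have "\<dots> = frechet_derivative B (at (g x)) (inv (D (g x)) (axis j 1))"
        proof -
          have "frechet_derivative (\<lambda>z. B (g z)) (at x) = (\<lambda>v. frechet_derivative B (at (g x)) (inv (D (g x)) v))"
            by (rule frechet_derivative_at[OF dd[OF x], symmetric])
          thus ?thesis by (simp add: pd_def)
        qed
        also have "\<dots> = (\<Sum>k\<in>UNIV. inv (D (g x)) (axis j 1) $ k * pd B (g x) k)"
          using fd_expand[OF smooth_differentiable[OF B(1) gV[OF x]]] by simp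
        also have "\<dots> = B' (g x)"
          unfolding B'_def using cram[OF gV[OF x]] by (simp add: mult_ac)
        finally show "pd h x j = B' (g x)" .
      qed
    qed
  qed
  define y0 where "y0 = \<Psi> w0"
  have gy0: "g y0 = w0" using gPsi[OF U'(3)] y0_def by simp
  obtain r where r: "r > 0" "ball w0 r \<subseteq> U'" using U'(1) U'(3) open_contains_ball by blast
  obtain \<rho>1 where \<rho>1: "\<rho>1 > 0" "ball y0 \<rho>1 \<subseteq> V" using V y0_def open_contains_ball by blast
  have "isCont g y0" using contg V y0_def continuous_on_eq_continuous_at by blast
  then obtain \<rho>0 where \<rho>0: "\<rho>0 > 0" "\<And>z. dist z y0 < \<rho>0 \<Longrightarrow> dist (g z) w0 < r / 2"
    unfolding continuous_at_eps_delta gy0 using r(1) by (metis half_gt_zero)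
  define \<rho> where "\<rho> = min \<rho>0 \<rho>1"
  define \<delta> where "\<delta> = min (1/2) (r / (4 * (norm w0 + r)))"
  have \<rho>pos: "\<rho> > 0" using \<rho>0 \<rho>1 by (simp add: \<rho>_def)
  have nr: "norm w0 + r > 0" using r(1) norm_ge_zero[of w0] by linarith
  have \<delta>pos: "\<delta> > 0" using r(1) nr by (simp add: \<delta>_def)
  have \<delta>1: "\<delta> < 1" by (simp add: \<delta>_def)
  have \<delta>bound: "\<delta> * (norm w0 + r) \<le> r / 4"
  proof -
    have "\<delta> \<le> r / (4 * (norm w0 + r))" by (simp add: \<delta>_def)
    hence "\<delta> * (norm w0 + r) \<le> r / (4 * (norm w0 + r)) * (norm w0 + r)"
      using nr by (intro mult_right_mono) auto
    also have "\<dots> = r / 4" using nr by (simp add: field_simps)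
    finally show ?thesis .
  qed
  have ballV: "ball y0 \<rho> \<subseteq> V" using \<rho>1 by (auto simp: \<rho>_def)
  have homog: "t *\<^sub>R z \<in> V \<and> G (t *\<^sub>R z) = G z + ln t"
    if z: "z \<in> ball y0 \<rho>" and t: "\<bar>t - 1\<bar> < \<delta>" for z t
  proof -
    have zV: "z \<in> V" using ballV z by blast
    define w where "w = g z"
    have wU': "w \<in> U'" using gV[OF zV] w_def by simp
    have dw: "dist w w0 < r / 2" using \<rho>0(2)[of z] z by (simp add: w_def \<rho>_def dist_commute)
    have tpos: "t > 0" using t \<delta>1 by auto
    have wc: "w $ c > 0" using Obc[OF U'Ob[OF wU']] .
    define w' where "w' = w + ((t - 1) * w $ c) *\<^sub>R axis c 1"
    have nw: "norm w \<le> norm w0 + r"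
    proof -
      have "norm w \<le> norm w0 + dist w w0" by (metis dist_norm norm_triangle_sub add.commute)
      thus ?thesis using dw r(1) by linarith
    qed
    have "\<bar>w $ c\<bar> \<le> norm w" by (rule component_le_norm_cart)
    hence "\<bar>t - 1\<bar> * \<bar>w $ c\<bar> \<le> \<delta> * (norm w0 + r)"
      using nw t by (intro mult_mono) auto
    hence small: "\<bar>t - 1\<bar> * \<bar>w $ c\<bar> \<le> r / 4" using \<delta>bound by linarith
    have "dist w' w0 \<le> dist w w0 + norm (((t - 1) * w $ c) *\<^sub>R (axis c 1 :: real^'n))"
      unfolding w'_def by (metis dist_norm dist_triangle_add_half add_diff_cancel_left' norm_triangle_ineq add.commute diff_add_eq)
    also have "norm (((t - 1) * w $ c) *\<^sub>R (axis c 1 :: real^'n)) = \<bar>t - 1\<bar> * \<bar>w $ c\<bar>"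
      by (simp add: abs_mult)
    finally have "dist w' w0 < r" using dw small r(1) by linarith
    hence w'U': "w' \<in> U'" using r(2) by (auto simp: dist_commute)
    have pw': "\<pi> w' = \<pi> w"
    proof -
      have "\<sigma> (Some i) \<noteq> c" for i unfolding c_def using inj\<sigma> by (simp add: inj_eq)
      thus ?thesis by (simp add: \<pi>_def w'_def vec_eq_iff axis_def)
    qed
    have cw': "w' $ c = t * w $ c" by (simp add: w'_def axis_def algebra_simps)
    have Pw': "\<Psi> w' = t *\<^sub>R z"
    proof -
      have "\<Psi> w' = t *\<^sub>R \<Psi> w" by (simp add: \<Psi>_def pw' cw')
      thus ?thesis using Psig[OF zV] w_def by simp
    qed
    have "t *\<^sub>R z \<in> V" using PsiU'[OF w'U'] Pw' by simp
    moreover have "G (t *\<^sub>R z) = ln (t * w $ c)" using GPsi[OF U'Ob[OF w'U']] Pw' cw' by simp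
    moreover have "G z = ln (w $ c)" using GPsi[OF U'Ob[OF wU']] Psig[OF zV] w_def by simp
    ultimately show ?thesis using tpos wc by (simp add: ln_mult)
  qed
  show ?thesis
  proof (intro exI conjI allI impI)
    show "open V" by (rule V(1))
    show "lam0 *\<^sub>R f \<xi>0 \<in> V" using V(2) y_eq by simp
    show "smooth_on V G" by (rule smG)
    show "0 < \<rho>" by (rule \<rho>pos)
    show "0 < \<delta>" by (rule \<delta>pos)
    show "\<delta> < 1" by (rule \<delta>1)
    show "ball (lam0 *\<^sub>R f \<xi>0) \<rho> \<subseteq> V" using ballV y_eq y0_def by simp
    fix z t assume "z \<in> ball (lam0 *\<^sub>R f \<xi>0) \<rho>" "\<bar>t - 1\<bar> < \<delta>"
    then show "t *\<^sub>R z \<in> V" "G (t *\<^sub>R z) = G z + ln t" using homog y_eq y0_def by auto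
  qed
qed



theorem lemma4p4:
  fixes U :: "(real^'m) set"
    and f :: "real^'m \<Rightarrow> real^'n"
    and Gam :: "real^'m \<Rightarrow> 'm \<Rightarrow> 'm \<Rightarrow> 'm \<Rightarrow> real"
    and h :: "real^'m \<Rightarrow> 'm \<Rightarrow> 'm \<Rightarrow> real"
    and \<xi>0 :: "real^'m" and lam0 :: real
    and N :: "((real^'m) \<times> real) set"
    and G :: "real^'n \<Rightarrow> real"
  assumes dim: "CARD('n) = CARD('m) + 1"
    and conn: "connected U"
    and imm: "centroaffine_immersion U f"
    and str: "structure_eq U f Gam h"
    and nondeg: "nondegenerate_metric U h"
    and par: "parallel_cubic_form U Gam h"
    and y: "\<xi>0 \<in> U" "lam0 > 0"
    and N: "open N" "(\<xi>0, lam0) \<in> N" "N \<subseteq> U \<times> {0<..}"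
    and G: "\<forall>(\<xi>, t)\<in>N. G (t *\<^sub>R f \<xi>) = ln t"
    and negdef: "negative_definite (gamma_form G (lam0 *\<^sub>R f \<xi>0))"
  shows "formally_real (jprod G (lam0 *\<^sub>R f \<xi>0))"
proof -
  obtain V \<rho> \<delta> where V: "open V" "lam0 *\<^sub>R f \<xi>0 \<in> V" "smooth_on V G" "0 < \<rho>" "0 < \<delta>" "\<delta> < 1"
     "ball (lam0 *\<^sub>R f \<xi>0) \<rho> \<subseteq> V"
     "\<forall>z t. z \<in> ball (lam0 *\<^sub>R f \<xi>0) \<rho> \<longrightarrow> \<bar>t - 1\<bar> < \<delta> \<longrightarrow> t *\<^sub>R z \<in> V \<and> G (t *\<^sub>R z) = G z + ln t"
    using main_analytic[OF dim imm y N G] by blast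
  have eul: "\<And>a b. (\<Sum>d\<in>UNIV. F3 G (lam0 *\<^sub>R f \<xi>0) a b d * (lam0 *\<^sub>R f \<xi>0)$d) = -2 * F2 G (lam0 *\<^sub>R f \<xi>0) a b"
    by (rule euler_from_homog[OF V(1,2,3,4,5,6)]) (use V(7,8) in auto)
  show ?thesis by (rule alg_part[OF eul negdef])
qed

end
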